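(* Let $(G,V^\infty,T,k)$ be an instance of \textsc{OddMultiwayNodeCut} with $G$ a DAG, and let $M$ be a solution. Suppose there exists $v\in r_G(M)$ such that $M$ contains no important $v\rightarrow T$ separator. Then there exists a solution $M'$ such that: - $|M'|\le|M|$; - $r_G(M)\cup f_G(M)\cup M\subseteq r_G(M')\cup f_G(M')\cup M'$; - $r_G(M)\subsetneq r_G(M')$.
   Context: Paths are simple directed paths; a path is odd if it has an odd number of edges. An instance $(G,V^\infty,T,k)$ of \textsc{OddMultiwayNodeCut} consists of a DAG $G$, protected nodes $V^\infty\subseteq V(G)$, terminals $T\subseteq V^\infty$ and $k\in\mathbb{Z}_+$. A $T$-path has both ends in $T$. A solution is a set $M\subseteq V(G)\setminus V^\infty$ intersecting every odd $T$-path. $\mathcal{R}_H(X)$ is the set of nodes reachable from $X$ in $H$, including $X$. The shadows are $f_G(M):=V(G\setminus M)\setminus\mathcal{R}_{G\setminus M}(T)$, and $r_G(M):=$ the set of $v\in V(G)\setminus M$ with no path to $T$ in $G\setminus M$. For $X,Y\subseteq V(G)$, an $X\rightarrow Y$ separator is a set $S\subseteq V(G)\setminus V^\infty$ such that $G\setminus S$ has no path from $X$ to $Y$. An $X\rightarrow Y$ separator $S'$ dominates an $X\rightarrow Y$ separator $S$ if $|S'|\le|S|$ and $\mathcal{R}_{G\setminus S}(X)\subsetneq\mathcal{R}_{G\setminus S'}(X)$. An important $X\rightarrow Y$ separator is an inclusion-minimal $X\rightarrow Y$ separator that is dominated by no other $X\rightarrow Y$ separator. *)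

theory Defs
  imports Main
begin

text \<open>A directed graph is given by a vertex set V and an edge set E (pairs (u,w) = edge u->w).
  The graph G minus a node set S has vertices V - S and the edges of E between them.\<close>

definition dag :: "'a set \<Rightarrow> ('a \<times> 'a) set \<Rightarrow> bool" where
  "dag V E \<longleftrightarrow> finite V \<and> E \<subseteq> V \<times> V \<and> acyclic E"

definition del_edges :: "('a \<times> 'a) set \<Rightarrow> 'a set \<Rightarrow> ('a \<times> 'a) set" where
  "del_edges E S = {(a, b) \<in> E. a \<notin> S \<and> b \<notin> S}"

definition is_path :: "'a set \<Rightarrow> ('a \<times> 'a) set \<Rightarrow> 'a list \<Rightarrow> bool" where
  "is_path V E p \<longleftrightarrow> p \<noteq> [] \<and> distinct p \<and> set p \<subseteq> V \<and> successively (\<lambda>a b. (a, b) \<in> E) p"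

definition path_len :: "'a list \<Rightarrow> nat" where
  "path_len p = length p - 1"

definition has_path :: "'a set \<Rightarrow> ('a \<times> 'a) set \<Rightarrow> 'a set \<Rightarrow> 'a \<Rightarrow> 'a \<Rightarrow> bool" where
  "has_path V E S x y \<longleftrightarrow>
     (\<exists>p. is_path (V - S) (del_edges E S) p \<and> hd p = x \<and> last p = y)"

text \<open>\<R>_{G minus S}(X): nodes reachable from X in G minus S (including X, i.e. X minus S).\<close>
definition reach :: "'a set \<Rightarrow> ('a \<times> 'a) set \<Rightarrow> 'a set \<Rightarrow> 'a set \<Rightarrow> 'a set" where
  "reach V E S X = {u. \<exists>x\<in>X. has_path V E S x u}"

definition odd_T_path :: "'a set \<Rightarrow> ('a \<times> 'a) set \<Rightarrow> 'a set \<Rightarrow> 'a list \<Rightarrow> bool" where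
  "odd_T_path V E T p \<longleftrightarrow> is_path V E p \<and> hd p \<in> T \<and> last p \<in> T \<and> odd (path_len p)"

definition omnc_solution :: "'a set \<Rightarrow> ('a \<times> 'a) set \<Rightarrow> 'a set \<Rightarrow> 'a set \<Rightarrow> 'a set \<Rightarrow> bool" where
  "omnc_solution V E Vinf T M \<longleftrightarrow>
     M \<subseteq> V - Vinf \<and> (\<forall>p. odd_T_path V E T p \<longrightarrow> set p \<inter> M \<noteq> {})"

definition f_shadow :: "'a set \<Rightarrow> ('a \<times> 'a) set \<Rightarrow> 'a set \<Rightarrow> 'a set \<Rightarrow> 'a set" where
  "f_shadow V E T M = (V - M) - reach V E M T"

definition r_shadow :: "'a set \<Rightarrow> ('a \<times> 'a) set \<Rightarrow> 'a set \<Rightarrow> 'a set \<Rightarrow> 'a set" where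
  "r_shadow V E T M = {v \<in> V - M. \<not> (\<exists>t\<in>T. has_path V E M v t)}"

definition separator :: "'a set \<Rightarrow> ('a \<times> 'a) set \<Rightarrow> 'a set \<Rightarrow> 'a set \<Rightarrow> 'a set \<Rightarrow> 'a set \<Rightarrow> bool" where
  "separator V E Vinf X Y S \<longleftrightarrow> S \<subseteq> V - Vinf \<and> \<not> (\<exists>x\<in>X. \<exists>y\<in>Y. has_path V E S x y)"

definition dominates :: "'a set \<Rightarrow> ('a \<times> 'a) set \<Rightarrow> 'a set \<Rightarrow> 'a set \<Rightarrow> 'a set \<Rightarrow> bool" where
  "dominates V E X S' S \<longleftrightarrow> card S' \<le> card S \<and> reach V E S X \<subset> reach V E S' X"

definition important_separator :: "'a set \<Rightarrow> ('a \<times> 'a) set \<Rightarrow> 'a set \<Rightarrow> 'a set \<Rightarrow> 'a set \<Rightarrow> 'a set \<Rightarrow> bool" where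
  "important_separator V E Vinf X Y S \<longleftrightarrow>
     separator V E Vinf X Y S \<and>
     (\<forall>S'. S' \<subset> S \<longrightarrow> \<not> separator V E Vinf X Y S') \<and>
     \<not> (\<exists>S'. separator V E Vinf X Y S' \<and> dominates V E X S' S)"

end

theory Submission
  imports Defs
begin

lemma path_last_reach:
  "successively (\<lambda>a b. (a, b) \<in> E') p \<Longrightarrow> x \<in> set p \<Longrightarrow> (x, last p) \<in> E'\<^sup>*"
proof (induction p arbitrary: x)
  case Nil then show ?case by simp
next
  case (Cons a p)
  show ?case
  proof (cases "p = []")
    case True then show ?thesis using Cons by simp
  next
    case False
    have s: "successively (\<lambda>a b. (a, b) \<in> E') p" and e: "(a, hd p) \<in> E'"
      using Cons.prems(1) False by (auto simp: successively_Cons)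
    have hl: "(hd p, last p) \<in> E'\<^sup>*" using Cons.IH[OF s, of "hd p"] False by simp
    show ?thesis
    proof (cases "x = a")
      case True then show ?thesis using e hl False by (simp add: converse_rtrancl_into_rtrancl)
    next
      case False2: False
      then have "x \<in> set p" using Cons.prems by simp
      then show ?thesis using Cons.IH[OF s] False by simp
    qed
  qed
qed

lemma rtrancl_path:
  assumes "(x,y) \<in> E'\<^sup>*" "acyclic E'" "E' \<subseteq> V'\<times>V'" "x \<in> V'"
  shows "\<exists>p. is_path V' E' p \<and> hd p = x \<and> last p = y"
  using assms(1)
proof (induction rule: rtrancl_induct)
  case base
  then show ?case using assms(4) by (intro exI[of _ "[x]"]) (auto simp: is_path_def)
next
  case (step y z)
  then obtain p where p: "is_path V' E' p" "hd p = x" "last p = y" by blast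
  have "z \<notin> set p"
  proof
    assume "z \<in> set p"
    then have "(z, y) \<in> E'\<^sup>*" using path_last_reach[of E' p z] p by (auto simp: is_path_def)
    then have "(z, z) \<in> E'\<^sup>+" using step(2) by (rule rtrancl_into_trancl1)
    then show False using assms(2) by (auto simp: acyclic_def)
  qed
  moreover have "z \<in> V'" using step(2) assms(3) by auto
  ultimately have "is_path V' E' (p @ [z])" using p step(2)
    by (auto simp: is_path_def successively_append_iff)
  then show ?case using p by (intro exI[of _ "p @ [z]"]) (auto simp: is_path_def)
qed

lemma has_path_iff:
  assumes "E \<subseteq> V\<times>V" "acyclic E"
  shows "has_path V E S x y \<longleftrightarrow> x \<in> V - S \<and> (x,y) \<in> (del_edges E S)\<^sup>*"
proof
  assume "has_path V E S x y"
  then obtain p where p: "is_path (V - S) (del_edges E S) p" "hd p = x" "last p = y"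
    by (auto simp: has_path_def)
  then have "x \<in> set p" by (auto simp: is_path_def)
  then show "x \<in> V - S \<and> (x,y) \<in> (del_edges E S)\<^sup>*"
    using p path_last_reach[of "del_edges E S" p x] by (auto simp: is_path_def)
next
  assume a: "x \<in> V - S \<and> (x,y) \<in> (del_edges E S)\<^sup>*"
  have "acyclic (del_edges E S)" using assms(2)
    by (rule acyclic_subset) (auto simp: del_edges_def)
  moreover have "del_edges E S \<subseteq> (V - S) \<times> (V - S)" using assms(1) by (auto simp: del_edges_def)
  ultimately show "has_path V E S x y" using rtrancl_path[of x y "del_edges E S" "V - S"] a
    by (auto simp: has_path_def)
qed

lemma del_rtrancl_notin:
  "(x,y) \<in> (del_edges E S)\<^sup>* \<Longrightarrow> x \<notin> S \<Longrightarrow> y \<notin> S"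
  by (induction rule: rtrancl_induct) (auto simp: del_edges_def)

lemma rtr_in: "(x,u) \<in> R\<^sup>* \<Longrightarrow> R \<subseteq> V\<times>V \<Longrightarrow> x \<in> V \<Longrightarrow> u \<in> V"
  by (induction rule: rtrancl_induct) auto

lemma del_mono: "S \<subseteq> S' \<Longrightarrow> del_edges E S' \<subseteq> del_edges E S"
  by (auto simp: del_edges_def)

theorem lemma2p9:
  fixes V :: "'a set" and E :: "('a \<times> 'a) set" and Vinf T M :: "'a set" and k :: nat
  assumes "dag V E"
    and "Vinf \<subseteq> V" and "T \<subseteq> Vinf" and "k > 0"
    and "omnc_solution V E Vinf T M"
    and "v \<in> r_shadow V E T M"
    and "\<not> (\<exists>S \<subseteq> M. important_separator V E Vinf {v} T S)"
  shows "\<exists>M'. omnc_solution V E Vinf T M' \<and> card M' \<le> card M \<and>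
    r_shadow V E T M \<union> f_shadow V E T M \<union> M \<subseteq> r_shadow V E T M' \<union> f_shadow V E T M' \<union> M' \<and>
    r_shadow V E T M \<subset> r_shadow V E T M'"
proof -
  from assms(1) have fin: "finite V" and EV: "E \<subseteq> V\<times>V" and acyc: "acyclic E"
    by (auto simp: dag_def)
  have hp: "\<And>S x y. has_path V E S x y \<longleftrightarrow> x \<in> V - S \<and> (x,y) \<in> (del_edges E S)\<^sup>*"
    using has_path_iff[OF EV acyc] by blast
  have de: "\<And>S a b. (a,b) \<in> del_edges E S \<longleftrightarrow> (a,b) \<in> E \<and> a \<notin> S \<and> b \<notin> S"
    by (auto simp: del_edges_def)
  have Msub: "M \<subseteq> V - Vinf" using assms(5) by (auto simp: omnc_solution_def)
  have finM: "finite M" using Msub fin finite_subset by blast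
  have vM: "v \<in> V - M" and vnoT: "\<not> (\<exists>t\<in>T. (v,t) \<in> (del_edges E M)\<^sup>*)"
    using assms(6) by (auto simp: r_shadow_def hp)
  have TM: "T \<inter> M = {}" using Msub assms(3) by auto
  have TV: "T \<subseteq> V" using assms(2,3) by auto
  have reachsub: "reach V E S X \<subseteq> V" for S X
  proof
    fix u assume "u \<in> reach V E S X"
    then obtain x where "x \<in> V - S" "(x,u) \<in> (del_edges E S)\<^sup>*" by (auto simp: reach_def hp)
    then show "u \<in> V" using rtr_in[of x u "del_edges E S" V] EV by (auto simp: del_edges_def)
  qed
  have hpmono: "has_path V E S x y" if a: "S \<subseteq> S'" "has_path V E S' x y" for S S' x y
  proof -
    have "(del_edges E S')\<^sup>* \<subseteq> (del_edges E S)\<^sup>*" using del_mono[OF a(1)] by (rule rtrancl_mono)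
    then show ?thesis using a unfolding hp by blast
  qed
  have reachmono: "\<And>S S' X. S \<subseteq> S' \<Longrightarrow> reach V E S' X \<subseteq> reach V E S X"
    unfolding reach_def using hpmono by blast

  define S where "S = {s \<in> M. \<exists>x. has_path V E M v x \<and> (x,s) \<in> E}"
  have SM: "S \<subseteq> M" by (auto simp: S_def)
  have sepS: "separator V E Vinf {v} T S"
  proof -
    have "has_path V E M v y" if "(v,y) \<in> (del_edges E S)\<^sup>*" for y
      using that
    proof (induction rule: rtrancl_induct)
      case base then show ?case using vM by (simp add: hp)
    next
      case (step y z)
      then have yz: "(y,z) \<in> E" "z \<notin> S" by (auto simp: de)
      have "z \<notin> M" using step yz by (auto simp: S_def)
      moreover have "y \<notin> M" using step.IH vM del_rtrancl_notin[of v y E M] by (auto simp: hp)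
      ultimately show ?case using step.IH yz
        by (auto simp: hp de intro: rtrancl_into_rtrancl)
    qed
    then show ?thesis using vnoT SM Msub unfolding separator_def by (auto simp: hp)
  qed
  have RS: "reach V E M {v} \<subseteq> reach V E S {v}" using reachmono SM by blast

  define F where "F = {S'. separator V E Vinf {v} T S' \<and> card S' \<le> card S \<and>
                         reach V E S {v} \<subseteq> reach V E S' {v}}"
  have SF: "S \<in> F" using sepS by (auto simp: F_def)
  have finF: "finite F"
    by (rule finite_subset[of _ "Pow V"]) (use fin in \<open>auto simp: F_def separator_def\<close>)
  define m where "m = Max ((\<lambda>S'. card (reach V E S' {v})) ` F)"
  have mge: "\<And>S'. S' \<in> F \<Longrightarrow> card (reach V E S' {v}) \<le> m"
    unfolding m_def using finF by auto
  obtain S0 where S0: "S0 \<in> F" "card (reach V E S0 {v}) = m"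
  proof -
    have "m \<in> (\<lambda>S'. card (reach V E S' {v})) ` F"
      unfolding m_def using finF SF by (intro Max_in) auto
    then show ?thesis using that by blast
  qed
  obtain Ss where Ss: "Ss \<in> F \<and> card (reach V E Ss {v}) = m"
    and Ssmin: "\<forall>S'. S' \<in> F \<and> card (reach V E S' {v}) = m \<longrightarrow> card Ss \<le> card S'"
    using ex_has_least_nat[of "\<lambda>S'. S' \<in> F \<and> card (reach V E S' {v}) = m" S0 card] S0 by blast
  have sepSs: "separator V E Vinf {v} T Ss" and cardSs: "card Ss \<le> card S"
    and RSs: "reach V E S {v} \<subseteq> reach V E Ss {v}" using Ss by (auto simp: F_def)
  have finSs: "finite Ss" using sepSs fin finite_subset by (auto simp: separator_def)
  have impSs: "important_separator V E Vinf {v} T Ss"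
    unfolding important_separator_def
  proof (intro conjI notI allI impI)
    show "separator V E Vinf {v} T Ss" by (rule sepSs)
  next
    fix S' assume a: "S' \<subset> Ss" "separator V E Vinf {v} T S'"
    have c: "card S' < card Ss" using a(1) finSs psubset_card_mono by blast
    have r: "reach V E Ss {v} \<subseteq> reach V E S' {v}" using reachmono a(1) by blast
    have "S' \<in> F" using a c cardSs r RSs by (auto simp: F_def)
    moreover have "card (reach V E Ss {v}) \<le> card (reach V E S' {v})"
      using r card_mono[OF finite_subset[OF reachsub fin]] by blast
    ultimately have "card (reach V E S' {v}) = m" using mge Ss by fastforce
    then show False using Ssmin c \<open>S' \<in> F\<close> by fastforce
  next
    assume "\<exists>S'. separator V E Vinf {v} T S' \<and> dominates V E {v} S' Ss"
    then obtain S' where a: "separator V E Vinf {v} T S'" "card S' \<le> card Ss"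
      "reach V E Ss {v} \<subset> reach V E S' {v}" by (auto simp: dominates_def)
    have "S' \<in> F" using a cardSs RSs by (auto simp: F_def)
    moreover have "card (reach V E Ss {v}) < card (reach V E S' {v})"
      using a(3) psubset_card_mono[OF finite_subset[OF reachsub fin]] by blast
    ultimately show False using mge Ss by fastforce
  qed
  have "\<not> Ss \<subseteq> M" using assms(7) impSs by blast
  then obtain s0 where s0: "s0 \<in> S" "s0 \<notin> Ss"
    using card_seteq[OF finSs _ cardSs] SM by blast
  define N where "N = reach V E Ss {v}"
  have vR: "v \<in> reach V E M {v}" using vM by (auto simp: reach_def hp)
  have RN: "reach V E M {v} \<subseteq> N" using RS RSs N_def by blast
  have vN: "v \<in> N" using vR RN by blast
  have vSs: "v \<notin> Ss" using vN by (auto simp: N_def reach_def hp)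
  have Nchar: "u \<in> N \<longleftrightarrow> (v,u) \<in> (del_edges E Ss)\<^sup>*" for u
    using vSs vM by (auto simp: N_def reach_def hp)
  have NT: "N \<inter> T = {}" using sepSs by (auto simp: separator_def N_def reach_def)
  have NSs: "u \<in> N \<Longrightarrow> u \<notin> Ss" for u
    using Nchar del_rtrancl_notin[of v u E Ss] vSs by blast
  have SN: "S - Ss \<subseteq> N"
  proof
    fix s assume s: "s \<in> S - Ss"
    then obtain x where x: "has_path V E M v x" "(x,s) \<in> E" by (auto simp: S_def)
    have "x \<in> N" using x(1) RN by (auto simp: reach_def)
    then have "(v,x) \<in> (del_edges E Ss)\<^sup>*" "x \<notin> Ss" using Nchar NSs by auto
    then have "(v,s) \<in> (del_edges E Ss)\<^sup>*" using x(2) s by (auto simp: de intro: rtrancl_into_rtrancl)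
    then show "s \<in> N" using Nchar by blast
  qed
  define rM where "rM = r_shadow V E T M"
  have rMchar: "x \<in> rM \<longleftrightarrow> x \<in> V - M \<and> \<not> (\<exists>t\<in>T. (x,t) \<in> (del_edges E M)\<^sup>*)" for x
    by (auto simp: rM_def r_shadow_def hp)
  define M2 where "M2 = (M - S) \<union> (Ss - rM)"
  have K: "u \<notin> M \<and> u \<notin> N \<and> (\<exists>t'\<in>T. (u,t') \<in> (del_edges E M)\<^sup>*)"
    if "(u,t) \<in> (del_edges E M2)\<^sup>*" "t \<in> T" "u \<in> V" "u \<notin> M2" for u t
    using that
  proof (induction rule: converse_rtrancl_induct)
    case base
    then show ?case using TM NT by auto
  next
    case (step u w)
    have uw: "(u,w) \<in> E" "u \<notin> M2" "w \<notin> M2" using step.hyps(1) by (auto simp: de)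
    have "w \<in> V" using uw(1) EV by blast
    then have IH: "w \<notin> M" "w \<notin> N" "\<exists>t'\<in>T. (w,t') \<in> (del_edges E M)\<^sup>*"
      using step.IH step.prems uw by auto
    have wrM: "w \<notin> rM" using IH rMchar by blast
    have wSs: "w \<notin> Ss" using wrM uw(3) M2_def by blast
    have uN: "u \<notin> N"
    proof
      assume "u \<in> N"
      then have "(v,u) \<in> (del_edges E Ss)\<^sup>*" "u \<notin> Ss" using Nchar NSs by auto
      then have "(v,w) \<in> (del_edges E Ss)\<^sup>*" using uw wSs by (auto simp: de intro: rtrancl_into_rtrancl)
      then show False using IH(2) Nchar by blast
    qed
    have uM: "u \<notin> M"
    proof
      assume uM: "u \<in> M"
      then have "u \<in> S" using uw(2) M2_def by blast
      moreover have "u \<notin> rM" using uM rMchar by blast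
      then have "u \<notin> Ss" using uw(2) M2_def by blast
      ultimately show False using SN uN by blast
    qed
    have uwM: "(u,w) \<in> del_edges E M" using uw(1) uM IH(1) unfolding de by blast
    obtain t' where t': "t' \<in> T" "(w,t') \<in> (del_edges E M)\<^sup>*" using IH(3) by blast
    have "(u,t') \<in> (del_edges E M)\<^sup>*" using converse_rtrancl_into_rtrancl[OF uwM t'(2)] .
    then have "\<exists>t'\<in>T. (u,t') \<in> (del_edges E M)\<^sup>*" using t'(1) by blast
    then show ?case using uM uN by blast
  qed
  have Kfwd: "(t0,y) \<in> (del_edges E M)\<^sup>*"
    if "(t0,y) \<in> (del_edges E M2)\<^sup>*" "(y,t) \<in> (del_edges E M2)\<^sup>*" "t \<in> T" "y \<in> V" "y \<notin> M2"
    for t0 y t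
    using that
  proof (induction arbitrary: t rule: rtrancl_induct)
    case base then show ?case by simp
  next
    case (step y z)
    have yz: "(y,z) \<in> E" "y \<notin> M2" "z \<notin> M2" using step.hyps(2) by (auto simp: de)
    have yV: "y \<in> V" using yz(1) EV by blast
    have yt: "(y,t) \<in> (del_edges E M2)\<^sup>*" using converse_rtrancl_into_rtrancl[OF step.hyps(2) step.prems(1)] .
    have "(t0,y) \<in> (del_edges E M)\<^sup>*" using step.IH[OF yt step.prems(2) yV yz(2)] .
    moreover have "y \<notin> M" using K[OF yt step.prems(2) yV yz(2)] by blast
    moreover have "z \<notin> M" using K[OF step.prems(1,2,3,4)] by blast
    ultimately show ?case using yz(1) by (auto simp: de intro: rtrancl_into_rtrancl)
  qed
  have SMV: "Ss \<subseteq> V - Vinf" using sepSs by (auto simp: separator_def)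
  have M2sub: "M2 \<subseteq> V - Vinf" using Msub SMV by (auto simp: M2_def)
  have sol: "omnc_solution V E Vinf T M2"
    unfolding omnc_solution_def
  proof (intro conjI allI impI M2sub)
    fix p assume P: "odd_T_path V E T p"
    show "set p \<inter> M2 \<noteq> {}"
    proof
      assume dis: "set p \<inter> M2 = {}"
      have ip: "is_path V E p" "last p \<in> T" using P by (auto simp: odd_T_path_def)
      have succ: "successively (\<lambda>a b. (a, b) \<in> del_edges E M2) p"
        using ip(1) dis by (auto simp: is_path_def de intro: successively_mono)
      have "x \<notin> M" if x: "x \<in> set p" for x
      proof -
        have "(x, last p) \<in> (del_edges E M2)\<^sup>*" using path_last_reach[OF succ x] .
        moreover have "x \<in> V" "x \<notin> M2" using x ip(1) dis by (auto simp: is_path_def)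
        ultimately show ?thesis using K ip(2) by blast
      qed
      then have "set p \<inter> M = {}" by blast
      then show False using assms(5) P by (auto simp: omnc_solution_def)
    qed
  qed
  have finS: "finite S" using SM finM finite_subset by blast
  have card2: "card M2 \<le> card M"
  proof -
    have "card M2 \<le> card (M - S) + card (Ss - rM)" unfolding M2_def by (rule card_Un_le)
    also have "\<dots> \<le> card (M - S) + card Ss" using finSs by (simp add: card_mono)
    also have "\<dots> \<le> card (M - S) + card S" using cardSs by simp
    also have "\<dots> = card M" using SM finS finM
      by (metis card_Diff_subset diff_add finite_subset card_mono)
    finally show ?thesis .
  qed
  have rsub: "rM \<subseteq> r_shadow V E T M2"
  proof
    fix x assume x: "x \<in> rM"
    then have xM2: "x \<notin> M2" using rMchar by (auto simp: M2_def)
    have "\<not> has_path V E M2 x t" if "t \<in> T" for t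
      using K[of x t] x that rMchar by (auto simp: hp)
    then show "x \<in> r_shadow V E T M2" using xM2 x rMchar by (auto simp: r_shadow_def)
  qed
  have s0r: "s0 \<in> r_shadow V E T M2"
  proof -
    have s0M: "s0 \<in> M" using s0 SM by blast
    have s0M2: "s0 \<notin> M2" using s0 by (auto simp: M2_def)
    have "\<not> has_path V E M2 s0 t" if "t \<in> T" for t
      using K[of s0 t] s0M that by (auto simp: hp)
    then show ?thesis using s0M2 s0M Msub by (auto simp: r_shadow_def)
  qed
  have s0nr: "s0 \<notin> rM" using s0 SM rMchar by blast
  have big: "r_shadow V E T M \<union> f_shadow V E T M \<union> M \<subseteq> r_shadow V E T M2 \<union> f_shadow V E T M2 \<union> M2"
  proof
    fix x assume x: "x \<in> r_shadow V E T M \<union> f_shadow V E T M \<union> M"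
    have xV: "x \<in> V" using x Msub by (auto simp: r_shadow_def f_shadow_def)
    show "x \<in> r_shadow V E T M2 \<union> f_shadow V E T M2 \<union> M2"
    proof (rule ccontr)
      assume nx: "x \<notin> r_shadow V E T M2 \<union> f_shadow V E T M2 \<union> M2"
      then have xM2: "x \<notin> M2" by blast
      from nx xV xM2 obtain t where t: "t \<in> T" "(x,t) \<in> (del_edges E M2)\<^sup>*"
        by (auto simp: r_shadow_def hp)
      from nx xV xM2 obtain t0 where t0: "t0 \<in> T" "has_path V E M2 t0 x"
        by (auto simp: f_shadow_def reach_def)
      have Kx: "x \<notin> M" "\<exists>t'\<in>T. (x,t') \<in> (del_edges E M)\<^sup>*" using K[OF t(2) t(1) xV xM2] by auto
      have "(t0,x) \<in> (del_edges E M)\<^sup>*" using Kfwd[of t0 x t] t0(2) t xV xM2 by (auto simp: hp)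
      moreover have "t0 \<in> V - M" using t0(1) TV TM by auto
      ultimately have "x \<in> reach V E M T" using t0(1) by (auto simp: reach_def hp)
      then have "x \<notin> f_shadow V E T M" by (auto simp: f_shadow_def)
      moreover have "x \<notin> r_shadow V E T M" using Kx by (auto simp: r_shadow_def hp)
      ultimately show False using x Kx(1) by blast
    qed
  qed
  have strict: "r_shadow V E T M \<subset> r_shadow V E T M2"
    using rsub s0r s0nr unfolding rM_def by blast
  show ?thesis
    by (rule exI[of _ M2]) (intro conjI sol card2 big strict)
qed

end
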